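(* Let $d\ge3$, $h\ge1$, and let $\mathbf{x}_0$ be the standard basis vector of $\mathbb{Z}^V$ corresponding to the root $0$. Then the order of the image $\bar{\mathbf{x}}_0$ of $\mathbf{x}_0$ in $G(d,h)$ is $d(d-1)^h$.
   Context: Let $\mathcal{T}(d,h)$ be the rooted tree in which the root $0$ has $d$ children, every vertex at distance $1,\dots,h-1$ from the root has $d-1$ children, and the vertices at distance $h$ are leaves. Let $V$ be its vertex set, $A$ its adjacency matrix, $\Delta := dI-A$, and $\Lambda\subset\mathbb{Z}^V$ the lattice spanned by the rows of $\Delta$. Then $G(d,h):=\mathbb{Z}^V/\Lambda$; for $\mathbf{v}\in\mathbb{Z}^V$, $\bar{\mathbf{v}}$ denotes its image in $G(d,h)$. $\{\mathbf{x}_i:i\in V\}$ is the standard basis of $\mathbb{Z}^V$. *)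

theory Defs
  imports Main
begin

text \<open>Vertices of T(d,h) are encoded as lists of child indices along the path
  from the root: the root 0 is the empty list; a vertex at depth k is a list
  [c1,...,ck] with c1 < d (the root has d children) and ci < d-1 for i >= 2
  (non-root inner vertices have d-1 children); depth is at most h.\<close>

definition tree_verts :: "nat \<Rightarrow> nat \<Rightarrow> nat list set" where
  "tree_verts d h = {vs. length vs \<le> h \<and>
      (\<forall>k<length vs. vs ! k < (if k = 0 then d else d - 1))}"

definition tree_root :: "nat list" where
  "tree_root = []"

definition tree_adj :: "nat \<Rightarrow> nat \<Rightarrow> nat list \<Rightarrow> nat list \<Rightarrow> bool" where
  "tree_adj d h u v \<longleftrightarrow> u \<in> tree_verts d h \<and> v \<in> tree_verts d h \<and>
      ((\<exists>c. v = u @ [c]) \<or> (\<exists>c. u = v @ [c]))"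

definition adj_matrix :: "nat \<Rightarrow> nat \<Rightarrow> nat list \<Rightarrow> nat list \<Rightarrow> int" where
  "adj_matrix d h i j = (if tree_adj d h i j then 1 else 0)"

definition Delta :: "nat \<Rightarrow> nat \<Rightarrow> nat list \<Rightarrow> nat list \<Rightarrow> int" where
  "Delta d h i j = (if i \<in> tree_verts d h \<and> j \<in> tree_verts d h
      then (if i = j then int d else 0) - adj_matrix d h i j else 0)"

definition Lambda :: "nat \<Rightarrow> nat \<Rightarrow> (nat list \<Rightarrow> int) set" where
  "Lambda d h = {x. \<exists>c :: nat list \<Rightarrow> int.
      x = (\<lambda>j. \<Sum>i\<in>tree_verts d h. c i * Delta d h i j)}"

definition basis_vec :: "nat list \<Rightarrow> nat list \<Rightarrow> int" where
  "basis_vec i = (\<lambda>j. if j = i then 1 else 0)"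

definition quot_order :: "('a \<Rightarrow> int) set \<Rightarrow> ('a \<Rightarrow> int) \<Rightarrow> nat" where
  "quot_order L v = (if \<exists>n::nat. n > 0 \<and> (\<lambda>j. int n * v j) \<in> L
      then (LEAST n::nat. n > 0 \<and> (\<lambda>j. int n * v j) \<in> L) else 0)"

end

theory Submission imports Defs begin

definition br :: "nat \<Rightarrow> nat \<Rightarrow> nat" where
  "br d k = (if k = 0 then d else d - 1)"

lemma fin_V: "finite (tree_verts d h)"
proof -
  have "tree_verts d h \<subseteq> {xs. set xs \<subseteq> {..<d} \<and> length xs \<le> h}"
  proof
    fix xs assume xs: "xs \<in> tree_verts d h"
    have "x < d" if "x \<in> set xs" for x
    proof -
      obtain k where k: "k < length xs" "xs ! k = x" using \<open>x \<in> set xs\<close> by (auto simp: in_set_conv_nth)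
      have "xs ! k < (if k = 0 then d else d - 1)" using xs k(1) by (simp add: tree_verts_def)
      then show ?thesis using k(2) by (auto split: if_splits)
    qed
    then show "xs \<in> {xs. set xs \<subseteq> {..<d} \<and> length xs \<le> h}" using xs by (auto simp: tree_verts_def)
  qed
  then show ?thesis using finite_lists_length_le[of "{..<d}" h] finite_subset by blast
qed

lemma root_V: "[] \<in> tree_verts d h"
  by (simp add: tree_verts_def)

lemma snoc_V: "vs @ [a] \<in> tree_verts d h \<longleftrightarrow>
   vs \<in> tree_verts d h \<and> length vs < h \<and> a < br d (length vs)"
proof
  assume H: "vs @ [a] \<in> tree_verts d h"
  then have A: "length vs < h" and B: "\<And>k. k < length vs + 1 \<Longrightarrow> (vs@[a]) ! k < (if k = 0 then d else d - 1)"
    by (auto simp: tree_verts_def)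
  have "vs ! k < (if k = 0 then d else d - 1)" if "k < length vs" for k
    using B[of k] that by (simp add: nth_append_left)
  then have "vs \<in> tree_verts d h" using A by (simp add: tree_verts_def)
  moreover have "a < br d (length vs)" using B[of "length vs"] by (simp add: br_def)
  ultimately show "vs \<in> tree_verts d h \<and> length vs < h \<and> a < br d (length vs)" using A by blast
next
  assume H: "vs \<in> tree_verts d h \<and> length vs < h \<and> a < br d (length vs)"
  have "(vs @ [a]) ! k < (if k = 0 then d else d - 1)" if "k < length (vs @ [a])" for k
  proof (cases "k < length vs")
    case True
    then show ?thesis using H by (simp add: nth_append_left tree_verts_def)
  next
    case False
    then have "k = length vs" using that by simp
    then show ?thesis using H by (simp add: br_def)
  qed
  then show "vs @ [a] \<in> tree_verts d h" using H by (simp add: tree_verts_def)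
qed

lemma butlast_V: "v \<in> tree_verts d h \<Longrightarrow> butlast v \<in> tree_verts d h"
proof (cases "v = []")
  case False
  assume "v \<in> tree_verts d h"
  then have "butlast v @ [last v] \<in> tree_verts d h" using False by simp
  then show ?thesis using snoc_V by blast
qed simp

lemma eqn:
  assumes j: "j \<in> tree_verts d h"
  shows "(\<Sum>i\<in>tree_verts d h. c i * Delta d h i j) = int d * c j
     - (if j = [] then 0 else c (butlast j))
     - (if length j < h then (\<Sum>a<br d (length j). c (j @ [a])) else 0)"
proof -
  let ?V = "tree_verts d h"
  have par: "(\<exists>x. j = i @ [x]) \<longleftrightarrow> (j \<noteq> [] \<and> i = butlast j)" for i
    by (metis butlast_snoc snoc_eq_iff_butlast)
  have nb: "butlast j \<noteq> j @ [x]" for x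
  proof
    assume "butlast j = j @ [x]"
    then have "length (butlast j) = length (j @ [x])" by simp
    then show False by simp
  qed
  have "(\<Sum>i\<in>?V. c i * Delta d h i j) = (\<Sum>i\<in>?V. (if i = j then int d * c i else 0)
        - ((if j \<noteq> [] \<and> i = butlast j then c i else 0) + (if \<exists>x. i = j @ [x] then c i else 0)))"
  proof (rule sum.cong[OF refl])
    fix i assume i: "i \<in> ?V"
    show "c i * Delta d h i j = (if i = j then int d * c i else 0)
        - ((if j \<noteq> [] \<and> i = butlast j then c i else 0) + (if \<exists>x. i = j @ [x] then c i else 0))"
      using i j nb unfolding Delta_def adj_matrix_def tree_adj_def par
      by (auto simp: algebra_simps)
  qed
  also have "\<dots> = int d * c j - ((if j = [] then 0 else c (butlast j)) +
       (\<Sum>i\<in>?V. (if \<exists>x. i = j @ [x] then c i else 0)))"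
  proof -
    have e1: "(\<Sum>i\<in>?V. (if i = j then int d * c i else 0)) = int d * c j"
      using j fin_V[of d h] by (simp add: sum.delta')
    have e2: "(\<Sum>i\<in>?V. (if j \<noteq> [] \<and> i = butlast j then c i else 0)) = (if j = [] then 0 else c (butlast j))"
      using butlast_V[OF j] fin_V[of d h] by (cases "j = []") (simp_all add: sum.delta')
    show ?thesis unfolding sum_subtractf sum.distrib e1 e2 by simp
  qed
  also have "(\<Sum>i\<in>?V. (if \<exists>x. i = j @ [x] then c i else 0)) =
       (if length j < h then (\<Sum>a<br d (length j). c (j @ [a])) else 0)"
  proof -
    have "(\<Sum>i\<in>?V. (if \<exists>x. i = j @ [x] then c i else 0)) = sum c (?V \<inter> {i. \<exists>x. i = j @ [x]})"
      using fin_V[of d h] by (simp add: sum.inter_filter Int_def conj_commute)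
    also have "?V \<inter> {i. \<exists>x. i = j @ [x]} = (if length j < h then (\<lambda>a. j @ [a]) ` {..<br d (length j)} else {})"
      using j by (auto simp: snoc_V)
    also have "sum c \<dots> = (if length j < h then (\<Sum>a<br d (length j). c (j @ [a])) else 0)"
      by (simp add: sum.reindex inj_on_def)
    finally show ?thesis .
  qed
  finally show ?thesis by simp
qed

fun g :: "int \<Rightarrow> nat \<Rightarrow> int" where
  "g e 0 = 1" | "g e (Suc m) = g e m + e ^ Suc m"

lemma gid: "(e + 1) * g e (Suc m) - e * g e m = g e (Suc (Suc m))"
  by (simp add: algebra_simps)

lemma g_pos: "e \<ge> 0 \<Longrightarrow> g e m > 0"
  by (induction m) (auto intro: add_pos_nonneg)

lemma uniq:
  assumes d3: "d \<ge> 3" and h1: "h \<ge> 1"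
    and E: "\<And>j. j \<in> tree_verts d h \<Longrightarrow>
       n * (if j = [] then 1 else 0) = (\<Sum>i\<in>tree_verts d h. c i * Delta d h i j)"
  shows "\<exists>t. n = int d * (int d - 1) ^ h * t"
proof -
  let ?V = "tree_verts d h"
  define e where "e = int d - 1"
  have e0: "e \<ge> 0" using d3 by (simp add: e_def)
  have ed: "int (d - 1) = e" using d3 by (simp add: e_def)
  have E2: "n * (if j = [] then 1 else 0) = int d * c j
     - (if j = [] then 0 else c (butlast j))
     - (if length j < h then (\<Sum>a<br d (length j). c (j @ [a])) else 0)" if "j \<in> ?V" for j
    using E[OF that] eqn[OF that, of c] by simp
  have P: "\<forall>v\<in>?V. v \<noteq> [] \<longrightarrow> length v + m = h \<longrightarrow>
      (\<exists>t. c v = g e m * t \<and> c (butlast v) = g e (Suc m) * t)" for m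
  proof (induction m)
    case 0
    show ?case
    proof (intro ballI impI)
      fix v assume v: "v \<in> ?V" "v \<noteq> []" "length v + 0 = h"
      have "0 = int d * c v - c (butlast v)" using E2[OF v(1)] v by simp
      then show "\<exists>t. c v = g e 0 * t \<and> c (butlast v) = g e (Suc 0) * t"
        by (intro exI[of _ "c v"]) (simp add: e_def)
    qed
  next
    case (Suc m)
    show ?case
    proof (intro ballI impI)
      fix v assume v: "v \<in> ?V" "v \<noteq> []" "length v + Suc m = h"
      have brv: "br d (length v) = d - 1" using v(2) by (simp add: br_def)
      have ch: "v @ [a] \<in> ?V" if "a < d - 1" for a
        using v that brv by (simp add: snoc_V)
      have ch0: "v @ [0] \<in> ?V" using ch d3 by simp
      obtain t where t: "c (v @ [0]) = g e m * t" "c v = g e (Suc m) * t"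
        using Suc.IH ch0 v(3) by fastforce
      have cha: "c (v @ [a]) = g e m * t" if ad: "a < d - 1" for a
      proof -
        obtain t' where t': "c (v @ [a]) = g e m * t'" "c v = g e (Suc m) * t'"
          using Suc.IH ch[OF ad] v(3) by fastforce
        have "t' = t" using t(2) t'(2) g_pos[OF e0, of "Suc m"] by simp
        then show ?thesis using t' by simp
      qed
      have "(\<Sum>a<br d (length v). c (v @ [a])) = (\<Sum>a<d-1. g e m * t)"
        unfolding brv using cha by simp
      also have "\<dots> = e * g e m * t" using ed by simp
      finally have S: "(\<Sum>a<br d (length v). c (v @ [a])) = e * g e m * t" .
      have "0 = int d * c v - c (butlast v) - e * g e m * t"
        using E2[OF v(1)] v S by simp
      then have "c (butlast v) = ((e + 1) * g e (Suc m) - e * g e m) * t"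
        using t(2) by (simp add: e_def algebra_simps)
      then have "c (butlast v) = g e (Suc (Suc m)) * t" by (simp only: gid)
      then show "\<exists>t. c v = g e (Suc m) * t \<and> c (butlast v) = g e (Suc (Suc m)) * t"
        using t(2) by blast
    qed
  qed
  obtain m where hm: "h = Suc m" using h1 by (cases h) auto
  have r: "[a] \<in> ?V" if "a < d" for a using that hm root_V snoc_V[of "[]" a d h]
    by (simp add: br_def)
  obtain t where t: "c [0] = g e m * t" "c [] = g e (Suc m) * t"
    using P[of m] r[of 0] d3 hm by fastforce
  have cha: "c [a] = g e m * t" if ad: "a < d" for a
  proof -
    obtain t' where t': "c [a] = g e m * t'" "c [] = g e (Suc m) * t'"
      using P[of m] r[OF ad] hm by fastforce
    have "t' = t" using t(2) t'(2) g_pos[OF e0, of "Suc m"] by simp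
    then show ?thesis using t' by simp
  qed
  have S: "(\<Sum>a<br d (length ([]::nat list)). c ([] @ [a])) = int d * g e m * t"
    using cha by (simp add: br_def)
  have "n = int d * c [] - int d * g e m * t"
    using E2[OF root_V] S hm by simp
  also have "\<dots> = int d * e ^ h * t" using t(2) hm by (simp add: algebra_simps)
  finally show ?thesis unfolding e_def by blast
qed

lemma exist:
  assumes d3: "d \<ge> 3" and h1: "h \<ge> 1" and j: "j \<in> tree_verts d h"
  shows "(\<Sum>i\<in>tree_verts d h. g (int d - 1) (h - length i) * Delta d h i j)
      = int d * (int d - 1) ^ h * (if j = [] then 1 else 0)"
proof -
  define e where "e = int d - 1"
  have ed: "int (d - Suc 0) = e" using d3 by (simp add: e_def)
  have de: "int d = e + 1" by (simp add: e_def)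
  have lj: "length j \<le> h" using j by (simp add: tree_verts_def)
  let ?c = "\<lambda>i. g e (h - length i)"
  have main: "(\<Sum>i\<in>tree_verts d h. ?c i * Delta d h i j) = int d * ?c j
     - (if j = [] then 0 else ?c (butlast j))
     - (if length j < h then (\<Sum>a<br d (length j). ?c (j @ [a])) else 0)"
    by (rule eqn[OF j])
  show ?thesis
  proof (cases "j = []")
    case True
    obtain m where hm: "h = Suc m" using h1 by (cases h) auto
    show ?thesis using True main hm unfolding e_def[symmetric]
      by (simp add: br_def algebra_simps)
  next
    case False
    have bl: "h - length (butlast j) = Suc (h - length j)" using False lj
      by (cases j rule: rev_cases) auto
    have brj: "br d (length j) = d - 1" using False by (simp add: br_def)
    show ?thesis
    proof (cases "length j < h")
      case True
      obtain m where m: "h - length j = Suc m" using True by (cases "h - length j") auto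
      have hc: "h - length (j @ [a]) = m" for a using m by simp
      have "(\<Sum>i\<in>tree_verts d h. ?c i * Delta d h i j) =
         (e + 1) * g e (Suc m) - g e (Suc (Suc m)) - e * g e m"
        using main False True ed unfolding bl brj m hc de by simp
      also have "\<dots> = 0" using gid[of e m] by simp
      finally show ?thesis using False by (simp add: e_def)
    next
      case lf: False
      then have "h - length j = 0" by simp
      then show ?thesis using main False lf unfolding bl \<open>h - length j = 0\<close> by (simp add: e_def)
    qed
  qed
qed

theorem proposition7p2:
  fixes d h :: nat
  assumes "d \<ge> 3" and "h \<ge> 1"
  shows "quot_order (Lambda d h) (basis_vec tree_root) = d * (d - 1) ^ h"
proof -
  let ?D = "d * (d - 1) ^ h"
  let ?V = "tree_verts d h"
  have i1: "int (d - 1) = int d - 1" using assms(1) by simp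
  have "int ?D = int d * int (d - 1) ^ h" by simp
  then have iD: "int ?D = int d * (int d - 1) ^ h" unfolding i1 .
  have Dpos: "?D > 0" using assms(1) by simp
  have bv: "basis_vec tree_root j = (if j = [] then 1 else 0)" for j
    by (simp add: basis_vec_def tree_root_def)
  have mem: "(\<lambda>j. int ?D * basis_vec tree_root j) \<in> Lambda d h"
    unfolding Lambda_def
  proof (intro CollectI exI[of _ "\<lambda>i. g (int d - 1) (h - length i)"] ext)
    fix j
    show "int ?D * basis_vec tree_root j =
      (\<Sum>i\<in>?V. g (int d - 1) (h - length i) * Delta d h i j)"
    proof (cases "j \<in> ?V")
      case True
      then show ?thesis using exist[OF assms True] iD bv by simp
    next
      case False
      then have "j \<noteq> []" using root_V by auto
      then show ?thesis using False bv by (simp add: Delta_def)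
    qed
  qed
  have low: "?D \<le> n" if n: "n > 0" "(\<lambda>j. int n * basis_vec tree_root j) \<in> Lambda d h" for n
  proof -
    obtain c where c: "(\<lambda>j. int n * basis_vec tree_root j) = (\<lambda>j. \<Sum>i\<in>?V. c i * Delta d h i j)"
      using n(2) unfolding Lambda_def by blast
    have "int n * (if j = [] then 1 else 0) = (\<Sum>i\<in>?V. c i * Delta d h i j)" if "j \<in> ?V" for j
      using fun_cong[OF c, of j] bv by simp
    then obtain t where t: "int n = int d * (int d - 1) ^ h * t" using uniq[OF assms] by blast
    then have "int n = int ?D * t" using iD by metis
    moreover have "t > 0" using n(1) Dpos \<open>int n = int ?D * t\<close>
      by (metis of_nat_0_less_iff zero_less_mult_pos)
    ultimately have "int ?D * 1 \<le> int n"
      by (metis mult_left_mono of_nat_0_le_iff int_one_le_iff_zero_less)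
    then show ?thesis by (metis mult.right_neutral of_nat_le_iff)
  qed
  have ex: "\<exists>n::nat. n > 0 \<and> (\<lambda>j. int n * basis_vec tree_root j) \<in> Lambda d h"
    using mem Dpos by blast
  have "(LEAST n::nat. n > 0 \<and> (\<lambda>j. int n * basis_vec tree_root j) \<in> Lambda d h) = ?D"
    by (rule Least_equality) (use mem Dpos low in auto)
  then show ?thesis unfolding quot_order_def using ex by simp
qed

end
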